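(* Let $M\ge1$ be an integer and $P_{\max},\sigma^2,\beta>0$, $b\ge1$, and $c_b=\frac{2^b}{\pi}\sin\frac{\pi}{2^b}$. For $N>0$ and $K\in\{1,\dots,M\}$ define $$R_s^{\mathrm D}(K)=K\log_2\!\left(1+\frac{P_{\max}MN^2\beta c_b^2}{K^3\sigma^2}\right),\qquad R_s^{\mathrm C}=\log_2\!\left(1+\frac{P_{\max}MN^2\beta c_b^2}{\sigma^2}\right).$$ The equation $g(x):=\ln(1+x)-3+\frac{3}{1+x}=0$ has a unique solution $C_{\mathrm{th}}$ in $(0,\infty)$. Moreover, (i) if $N\le\sqrt{\frac{C_{\mathrm{th}}\sigma^2}{P_{\max}M\beta c_b^2}}$, then $R_s^{\mathrm D}(K)\le R_s^{\mathrm C}$ for all $K\in\{1,\dots,M\}$; (ii) if $N\ge M\sqrt{\frac{C_{\mathrm{th}}\sigma^2}{P_{\max}\beta c_b^2}}$, then $R_s^{\mathrm D}(K)\ge R_s^{\mathrm C}$ for all $K\in\{1,\dots,M\}$.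
   Context: Interpretation: $R_s^{\mathrm D}(K)$ and $R_s^{\mathrm C}$ are the maximum sum-rates of an $M$-antenna base station serving $K$ users aided by $N$ IRS elements with $b$-bit phase quantization, under a distributed-IRS deployment (K IRSs of $N/K$ elements each, one per user) and a centralized-IRS deployment (one $N$-element IRS), respectively, with pure line-of-sight homogeneous channels of common two-hop path loss $\beta=(\rho_{g,1}\rho_{r,1})^2$, transmit power $P_{\max}$ and noise power $\sigma^2$. *)

theory Defs
  imports Complex_Main
begin

definition c_b :: "nat \<Rightarrow> real" where
  "c_b b = (2 ^ b / pi) * sin (pi / 2 ^ b)"

definition Rs_D :: "real \<Rightarrow> nat \<Rightarrow> real \<Rightarrow> real \<Rightarrow> nat \<Rightarrow> real \<Rightarrow> nat \<Rightarrow> real" where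
  "Rs_D Pmax M N beta b sigma2 K =
     real K * log 2 (1 + Pmax * real M * N^2 * beta * (c_b b)^2 / ((real K)^3 * sigma2))"

definition Rs_C :: "real \<Rightarrow> nat \<Rightarrow> real \<Rightarrow> real \<Rightarrow> nat \<Rightarrow> real \<Rightarrow> real" where
  "Rs_C Pmax M N beta b sigma2 =
     log 2 (1 + Pmax * real M * N^2 * beta * (c_b b)^2 / sigma2)"

definition g_th :: "real \<Rightarrow> real" where
  "g_th x = ln (1 + x) - 3 + 3 / (1 + x)"

definition C_th :: real where
  "C_th = (THE x. 0 < x \<and> g_th x = 0)"

end

theory Submission imports Defs begin

lemma g_deriv: assumes "x > -1"
  shows "DERIV g_th x :> (x - 2) / (1 + x)^2"
proof -
  have "DERIV (\<lambda>x. ln (1 + x) - 3 + 3 / (1 + x)) x :> (1 / (1+x) - 0 + (- (3 * 1) / (1+x)^2))"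
    using assms by (auto intro!: derivative_eq_intros simp: power2_eq_square)
  moreover have "(1 / (1+x) - 0 + (- (3 * 1) / (1+x)^2)) = (x - 2) / (1 + x)^2"
  proof -
    have "1 + x > 0" using assms by simp
    then show ?thesis by (simp add: divide_simps) (simp add: algebra_simps power2_eq_square)
  qed
  ultimately show ?thesis unfolding g_th_def[abs_def] by simp
qed

lemma g_cont: "0 \<le> a \<Longrightarrow> continuous_on {a..b} g_th"
proof (rule DERIV_atLeastAtMost_imp_continuous_on)
  fix x assume "0 \<le> a" "a \<le> x" then show "\<exists>y. DERIV g_th x :> y" using g_deriv[of x] by auto
qed

lemma g0: "g_th 0 = 0" by (simp add: g_th_def)

lemma g_neg: assumes "0 < x" "x \<le> 2" shows "g_th x < 0"
proof (cases "x = 2")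
  case True
  have "ln (3::real) < ln 4" by simp
  also have "ln (4::real) = 2 * ln 2" using ln_realpow[of 2 2] by simp
  also have "... < 2" using ln_2_less_1 by simp
  finally show ?thesis using True by (simp add: g_th_def)
next
  case False
  have "g_th 0 > g_th x"
  proof (rule DERIV_neg_imp_decreasing_open[OF assms(1)])
    fix z assume z: "0 < z" "z < x"
    show "\<exists>y. DERIV g_th z :> y \<and> y < 0"
      using g_deriv[of z] z assms by (intro exI[of _ "(z - 2) / (1 + z)^2"]) (auto intro!: divide_neg_pos)
  qed (use g_cont in auto)
  then show ?thesis using g0 by simp
qed

lemma g_inc: assumes "2 \<le> x" "x < y" shows "g_th x < g_th y"
proof (rule DERIV_pos_imp_increasing_open[OF assms(2)])
  fix z assume z: "x < z" "z < y"
  show "\<exists>y. DERIV g_th z :> y \<and> y > 0"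
    using g_deriv[of z] z assms by (intro exI[of _ "(z - 2) / (1 + z)^2"]) (auto intro!: divide_pos_pos)
qed (use g_cont assms in auto)

lemma g_big: "g_th (exp 3 - 1) > 0"
  by (simp add: g_th_def)

lemma g_ex1: "\<exists>!x. 0 < x \<and> g_th x = 0"
proof -
  have e: "exp (3::real) - 1 \<ge> 2" using exp_ge_add_one_self[of 3] by simp
  obtain x where x: "2 \<le> x" "x \<le> exp 3 - 1" "g_th x = 0"
    using IVT'[of g_th 2 0 "exp 3 - 1"] g_neg[of 2] g_big e g_cont[of 2] by auto
  show ?thesis
  proof (rule ex1I[of _ x])
    show "0 < x \<and> g_th x = 0" using x by simp
    fix y assume y: "0 < y \<and> g_th y = 0"
    have "y > 2" using g_neg[of y] y by (cases "y \<le> 2") auto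
    show "y = x" using g_inc[of x y] g_inc[of y x] x y \<open>y > 2\<close>
      by (cases x y rule: linorder_cases) auto
  qed
qed

lemma Cth: "0 < C_th" "g_th C_th = 0" "C_th > 2"
proof -
  have "0 < C_th \<and> g_th C_th = 0" unfolding C_th_def using theI'[OF g_ex1] .
  then show "0 < C_th" "g_th C_th = 0" by auto
  then show "C_th > 2" using g_neg[of C_th] by (cases "C_th \<le> 2") auto
qed

lemma g_le: assumes "0 \<le> x" "x \<le> C_th" shows "g_th x \<le> 0"
proof -
  consider "x = 0" | "0 < x" "x \<le> 2" | "2 < x" "x < C_th" | "x = C_th" using assms by linarith
  then show ?thesis
    by cases (use g0 g_neg[of x] g_inc[of x C_th] Cth in auto)
qed

lemma g_ge: assumes "C_th \<le> x" shows "g_th x \<ge> 0"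
  using g_inc[of C_th x] Cth assms by (cases "x = C_th") auto

lemma alg: fixes u A :: real assumes "u > 0" "A \<ge> 0"
  shows "ln (1 + A / u) + (- (3 * A * u) / (u * u)) / (1 + A / u) = ln (1 + A / u) - 3 + 3 / (1 + A / u)"
proof -
  have "u + A > 0" using assms by simp
  have "1 + A / u = (u + A) / u" using assms by (simp add: field_simps)
  then show ?thesis using assms \<open>u + A > 0\<close> by (simp add: field_simps)
qed

lemma h_deriv: fixes t A :: real assumes "t > 0" "A \<ge> 0"
  shows "DERIV (\<lambda>t. t * ln (1 + A / t^3)) t :> g_th (A / t^3)"
proof -
  have p: "1 + A / t^3 > 0" using assms by (simp add: add_pos_nonneg)
  have d: "DERIV (\<lambda>t. t * ln (1 + A / t^3)) t :>
     1 * ln (1 + A / t^3) + t * ((0 + (- (A * (3 * t^2)) / (t^3 * t^3))) / (1 + A / t^3))"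
    using assms p by (auto intro!: derivative_eq_intros simp: power2_eq_square) (simp add: mult_ac)
  have e1: "t * ((0 + (- (A * (3 * t^2)) / (t^3 * t^3))) / (1 + A / t^3))
      = (- (3 * A * t^3) / (t^3 * t^3)) / (1 + A / t^3)"
    by (simp add: power2_eq_square power3_eq_cube mult_ac)
  have "t^3 > 0" using assms by simp
  then have e2: "1 * ln (1 + A / t^3) + t * ((0 + (- (A * (3 * t^2)) / (t^3 * t^3))) / (1 + A / t^3))
     = g_th (A / t^3)"
    unfolding e1 g_th_def using alg[of "t^3" A] assms by simp
  show ?thesis using d unfolding e2 .
qed

lemma mono_i: fixes A k :: real assumes "0 \<le> A" "A \<le> C_th" "1 \<le> k"
  shows "k * ln (1 + A / k^3) \<le> ln (1 + A)"
proof -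
  have "(\<lambda>t. t * ln (1 + A / t^3)) k \<le> (\<lambda>t. t * ln (1 + A / t^3)) 1"
  proof (rule DERIV_nonpos_imp_nonincreasing[OF assms(3)])
    fix t :: real assume t: "1 \<le> t" "t \<le> k"
    have "1 \<le> t^3" using t by simp
    then have "A / t^3 \<le> A / 1" using assms t by (intro divide_left_mono) auto
    then have "g_th (A / t^3) \<le> 0" using g_le[of "A / t^3"] assms t by simp
    then show "\<exists>y. DERIV (\<lambda>t. t * ln (1 + A / t^3)) t :> y \<and> y \<le> 0"
      using h_deriv[of t A] t assms by auto
  qed
  then show ?thesis by simp
qed

lemma mono_ii: fixes A k :: real assumes "k^3 * C_th \<le> A" "1 \<le> k"
  shows "k * ln (1 + A / k^3) \<ge> ln (1 + A)"
proof -
  have A0: "0 \<le> A" proof -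
    have "0 \<le> k^3 * C_th" using assms Cth(1) by simp
    then show ?thesis using assms by linarith
  qed
  have "(\<lambda>t. t * ln (1 + A / t^3)) 1 \<le> (\<lambda>t. t * ln (1 + A / t^3)) k"
  proof (rule DERIV_nonneg_imp_nondecreasing[OF assms(2)])
    fix t :: real assume t: "1 \<le> t" "t \<le> k"
    have "t^3 \<le> k^3" using t by (simp add: power_mono)
    then have "t^3 * C_th \<le> A" using assms Cth(1) mult_right_mono[of "t^3" "k^3" C_th] by linarith
    then have "C_th \<le> A / t^3" using t by (simp add: le_divide_eq mult.commute)
    then have "g_th (A / t^3) \<ge> 0" using g_ge by simp
    then show "\<exists>y. DERIV (\<lambda>t. t * ln (1 + A / t^3)) t :> y \<and> y \<ge> 0"
      using h_deriv[of t A] t A0 by auto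
  qed
  then show ?thesis by simp
qed

lemma cb_pos: "b \<ge> 1 \<Longrightarrow> c_b b > 0"
proof -
  assume b: "b \<ge> 1"
  have "(2::real)^b \<ge> 2^1" using b by (intro power_increasing) auto
  then have "pi / 2^b < pi" using pi_gt_zero by (simp add: divide_less_eq)
  then have "sin (pi / 2^b) > 0" by (intro sin_gt_zero) auto
  then show ?thesis unfolding c_b_def by simp
qed

theorem theorem1:
  fixes M b :: nat and Pmax sigma2 beta :: real
  assumes "M \<ge> 1" and "b \<ge> 1" and "Pmax > 0" and "sigma2 > 0" and "beta > 0"
  shows "(\<exists>!x. 0 < x \<and> g_th x = 0)
    \<and> (\<forall>N::real. 0 < N \<longrightarrow>
          N \<le> sqrt (C_th * sigma2 / (Pmax * real M * beta * (c_b b)^2)) \<longrightarrow>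
          (\<forall>K\<in>{1..M}. Rs_D Pmax M N beta b sigma2 K \<le> Rs_C Pmax M N beta b sigma2))
    \<and> (\<forall>N::real. 0 < N \<longrightarrow>
          N \<ge> real M * sqrt (C_th * sigma2 / (Pmax * beta * (c_b b)^2)) \<longrightarrow>
          (\<forall>K\<in>{1..M}. Rs_D Pmax M N beta b sigma2 K \<ge> Rs_C Pmax M N beta b sigma2))"
proof (intro conjI allI impI ballI)
  show "\<exists>!x. 0 < x \<and> g_th x = 0" by (rule g_ex1)
next
  have c: "c_b b > 0" using cb_pos assms(2) by simp
  define B where "B = Pmax * real M * beta * (c_b b)^2 / sigma2"
  have B: "B > 0" unfolding B_def using assms c by simp
  have RD: "Rs_D Pmax M N beta b sigma2 K = real K * (ln (1 + B * N^2 / real K^3) / ln 2)" for N K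
    unfolding Rs_D_def log_def B_def by (simp add: field_simps)
  have RC: "Rs_C Pmax M N beta b sigma2 = ln (1 + B * N^2) / ln 2" for N
    unfolding Rs_C_def log_def B_def by (simp add: field_simps)
  {
    fix N :: real and K assume N: "0 < N" "N \<le> sqrt (C_th * sigma2 / (Pmax * real M * beta * (c_b b)^2))"
      and K: "K \<in> {1..M}"
    have "C_th * sigma2 / (Pmax * real M * beta * (c_b b)^2) = C_th / B"
      unfolding B_def by simp
    then have "N^2 \<le> C_th / B" using N Cth(1) B
      by (metis less_eq_real_def power_mono real_sqrt_ge_zero real_sqrt_pow2 divide_nonneg_pos)
    then have "B * N^2 \<le> C_th" using B by (simp add: le_divide_eq mult.commute)
    moreover have "1 \<le> real K" using K by simp
    ultimately have "real K * ln (1 + B * N^2 / real K^3) \<le> ln (1 + B * N^2)"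
      using mono_i[of "B * N^2" "real K"] B by simp
    then show "Rs_D Pmax M N beta b sigma2 K \<le> Rs_C Pmax M N beta b sigma2"
      unfolding RD RC by (simp add: divide_right_mono)
  }
  {
    fix N :: real and K assume N: "0 < N" "N \<ge> real M * sqrt (C_th * sigma2 / (Pmax * beta * (c_b b)^2))"
      and K: "K \<in> {1..M}"
    have q: "C_th * sigma2 / (Pmax * beta * (c_b b)^2) = real M * C_th / B"
      unfolding B_def using assms by simp
    have "(real M * sqrt (real M * C_th / B))^2 \<le> N^2" using N q B Cth(1)
      by (intro power_mono) (auto intro!: mult_nonneg_nonneg divide_nonneg_pos)
    then have "real M^2 * (real M * C_th / B) \<le> N^2" using B Cth(1)
      by (simp add: power_mult_distrib)
    then have "real M^3 * C_th \<le> B * N^2" using B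
      by (simp add: field_simps power2_eq_square power3_eq_cube)
    moreover have "real K^3 \<le> real M^3" using K by (simp add: power_mono)
    ultimately have "real K^3 * C_th \<le> B * N^2"
      using Cth(1) mult_right_mono[of "real K^3" "real M^3" C_th] by linarith
    moreover have "1 \<le> real K" using K by simp
    ultimately have "real K * ln (1 + B * N^2 / real K^3) \<ge> ln (1 + B * N^2)"
      using mono_ii[of "real K" "B * N^2"] by simp
    then show "Rs_D Pmax M N beta b sigma2 K \<ge> Rs_C Pmax M N beta b sigma2"
      unfolding RD RC by (simp add: divide_right_mono)
  }
qed

end
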